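(* Let $r,n,m_1,m_2,L_1,L_2$ be positive integers with $L_1>m_1$ and $L_2>m_2$, and let $\mathbf{H}_{i,j}\in\mathcal{P}^{r\times n}$, $0\le i\le m_1$, $0\le j\le m_2$, be the component matrices of a two-dimensional spatially-coupled (2D-SC) code with parameters $(m_1,m_2,L_1,L_2)$. Suppose that $$\sum_{i=0}^{m_1-d_1}\sum_{j=0}^{m_2-d_2}\langle \mathbf{H}_{i,j},\mathbf{H}_{i+d_1,j+d_2}\rangle_s=\mathbf{0}_{r\times r}\quad\text{for all }0\le d_1\le m_1,\ 0\le d_2\le m_2,$$ and $$\sum_{i=0}^{m_1-d_1}\sum_{j=0}^{m_2-d_2}\langle \mathbf{H}_{i+d_1,j},\mathbf{H}_{i,j+d_2}\rangle_s=\mathbf{0}_{r\times r}\quad\text{for all }0\le d_1\le m_1,\ 0\le d_2\le m_2.$$ Then the 2D-SC code is a stabilizer code, i.e. the $N$-qubit Pauli operators given by the rows of its parity-check matrix pairwise commute.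
   Context: $\mathcal{P}$ denotes the single-qubit Pauli matrices $\{I,X,Y,Z\}$ (phases ignored). For single-qubit Paulis $P,Q$ the symplectic product $\langle P,Q\rangle_s\in\mathbb{F}_2$ is $0$ if $P$ and $Q$ commute (i.e. $P=I$, $Q=I$ or $P=Q$) and $1$ otherwise. For $\mathbf{P}\in\mathcal{P}^{m_1\times n}$, $\mathbf{Q}\in\mathcal{P}^{m_2\times n}$, $\langle\mathbf{P},\mathbf{Q}\rangle_s$ is the $m_1\times m_2$ binary matrix with $(i,j)$ entry $\sum_{k=1}^n\langle P_{i,k},Q_{j,k}\rangle_s \bmod 2$; this is $0$ exactly when the tensor-product Pauli operators given by row $i$ of $\mathbf{P}$ and row $j$ of $\mathbf{Q}$ commute. The (tail-biting) 2D-SC code with component matrices $\mathbf{H}_{i,j}$ and coupling lengths $L_1,L_2$ has the $rL_1L_2\times nL_1L_2$ parity-check matrix $\mathbf{H}$ (entries in $\mathcal{P}$) whose row blocks are indexed by $(a,b)\in\mathbb{Z}_{L_1}\times\mathbb{Z}_{L_2}$ and column blocks by $(c,d)\in\mathbb{Z}_{L_1}\times\mathbb{Z}_{L_2}$ (blocks ordered lexicographically), where the $((a,b),(c,d))$ block is $\mathbf{H}_{i,j}$ if there are $0\le i\le m_1$, $0\le j\le m_2$ with $i\equiv a-c \pmod{L_1}$ and $j\equiv b-d\pmod{L_2}$, and is the all-$I$ matrix otherwise. Each row of $\mathbf{H}$ is read as an $N=nL_1L_2$-qubit Pauli operator (tensor product of its entries). *)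

theory Defs
  imports Main
begin

text \<open>Single-qubit Pauli matrices, phases ignored.\<close>
datatype pauli = PI | PX | PY | PZ

definition sympl :: "pauli \<Rightarrow> pauli \<Rightarrow> nat" where
  "sympl P Q = (if P = PI \<or> Q = PI \<or> P = Q then 0 else 1)"

text \<open>An m x n Pauli matrix is a function row \<Rightarrow> column \<Rightarrow> pauli (only the entries
  with row < m, column < n matter).\<close>
definition sympl_mat :: "nat \<Rightarrow> (nat \<Rightarrow> nat \<Rightarrow> pauli) \<Rightarrow> (nat \<Rightarrow> nat \<Rightarrow> pauli) \<Rightarrow> nat \<Rightarrow> nat \<Rightarrow> nat" where
  "sympl_mat n P Q a b = (\<Sum>k<n. sympl (P a k) (Q b k)) mod 2"

text \<open>Tail-biting 2D-SC parity-check matrix.  Component matrices are given by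
  Hc i j (an r x n Pauli matrix, for 0 \<le> i \<le> m1, 0 \<le> j \<le> m2).
  Row blocks (a,b), column blocks (c,d) in Z_L1 x Z_L2, ordered lexicographically:
  global row index ((a*L2+b)*r + t), global column index ((c*L2+d)*n + k).
  Block ((a,b),(c,d)) is Hc i j for the i \<le> m1, j \<le> m2 with i \<equiv> a-c (mod L1),
  j \<equiv> b-d (mod L2) (unique when L1 > m1, L2 > m2), and all-I otherwise.\<close>
definition sc2d_block :: "nat \<Rightarrow> nat \<Rightarrow> nat \<Rightarrow> nat \<Rightarrow> nat \<Rightarrow> nat
    \<Rightarrow> (nat \<Rightarrow> nat \<Rightarrow> nat \<Rightarrow> nat \<Rightarrow> pauli)
    \<Rightarrow> nat \<Rightarrow> nat \<Rightarrow> nat \<Rightarrow> nat \<Rightarrow> nat \<Rightarrow> nat \<Rightarrow> pauli" where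
  "sc2d_block m1 m2 L1 L2 r n Hc a b c d t k =
     (if \<exists>i\<le>m1. \<exists>j\<le>m2. int i mod int L1 = (int a - int c) mod int L1 \<and> int j mod int L2 = (int b - int d) mod int L2
      then (let i = nat ((int a - int c) mod int L1); j = nat ((int b - int d) mod int L2)
            in Hc i j t k)
      else PI)"

definition sc2d_H :: "nat \<Rightarrow> nat \<Rightarrow> nat \<Rightarrow> nat \<Rightarrow> nat \<Rightarrow> nat
    \<Rightarrow> (nat \<Rightarrow> nat \<Rightarrow> nat \<Rightarrow> nat \<Rightarrow> pauli) \<Rightarrow> nat \<Rightarrow> nat \<Rightarrow> pauli" where
  "sc2d_H m1 m2 L1 L2 r n Hc R C =
     (let rb = R div r; t = R mod r; a = rb div L2; b = rb mod L2;
          cb = C div n; k = C mod n; c = cb div L2; d = cb mod L2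
      in sc2d_block m1 m2 L1 L2 r n Hc a b c d t k)"

definition rows_commute :: "nat \<Rightarrow> (nat \<Rightarrow> nat \<Rightarrow> pauli) \<Rightarrow> nat \<Rightarrow> nat \<Rightarrow> bool" where
  "rows_commute N M R1 R2 \<longleftrightarrow> sympl_mat N M M R1 R2 = 0"

end

theory Submission
  imports Defs
begin

lemma sum_split:
  fixes g :: "nat \<Rightarrow> nat"
  shows "(\<Sum>C < m*n. g C) = (\<Sum>q<m. \<Sum>k<n. g (q*n+k))"
proof -
  have "(\<Sum>C < m*n. g C) = (\<Sum>q<m. sum g {q*n..<q*n+n})"
    using sum.nat_group[of g n m] by simp
  also have "\<dots> = (\<Sum>q<m. \<Sum>k<n. g (q*n+k))"
  proof (rule sum.cong[OF refl])
    fix q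
    show "sum g {q*n..<q*n+n} = (\<Sum>k<n. g (q*n+k))"
      using sum.shift_bounds_nat_ivl[of g 0 "q*n" n] by (simp add: lessThan_atLeast0 add.commute)
  qed
  finally show ?thesis .
qed

definition sub :: "nat \<Rightarrow> nat \<Rightarrow> nat \<Rightarrow> nat" where
  "sub L x y = (if y \<le> x then x - y else x + L - y)"

lemma sub_int: "x < L \<Longrightarrow> y < L \<Longrightarrow> nat ((int x - int y) mod int L) = sub L x y"
proof (cases "y \<le> x")
  case True
  assume "x < L" "y < L"
  then have "(int x - int y) mod int L = int x - int y" using True by (intro mod_pos_pos_trivial) auto
  then show ?thesis using True by (simp add: sub_def)
next
  case False
  assume a: "x < L" "y < L"
  have "(int x - int y) mod int L = (int x - int y + int L) mod int L" by simp
  also have "\<dots> = int x - int y + int L" using False a by (intro mod_pos_pos_trivial) auto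
  finally show ?thesis using False a by (simp add: sub_def)
qed

lemma mod2L: "(x::nat) < 2*L \<Longrightarrow> x mod L = (if x < L then x else x - L)"
  by (cases "x < L") (auto simp: le_mod_geq)

lemma sub_lt: "x < L \<Longrightarrow> y < L \<Longrightarrow> sub L x y < L"
  by (auto simp: sub_def)

lemma sub_sub: "x < L \<Longrightarrow> y < L \<Longrightarrow> sub L x (sub L x y) = y"
  by (auto simp: sub_def)

lemma sub_shift: "a < L \<Longrightarrow> a' < L \<Longrightarrow> i < L \<Longrightarrow> sub L a' (sub L a i) = (i + sub L a' a) mod L"
  apply (subst mod2L)
   apply (auto simp: sub_def)
  done

lemma sub_shift2: "a < L \<Longrightarrow> a' < L \<Longrightarrow> c < L \<Longrightarrow> sub L a' c = (sub L a c + sub L a' a) mod L"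
  apply (subst mod2L)
   apply (auto simp: sub_def)
  done

lemma reindex:
  fixes h :: "nat \<Rightarrow> nat \<Rightarrow> nat"
  assumes "a < L" "a' < L"
  shows "(\<Sum>c<L. h (sub L a c) (sub L a' c)) = (\<Sum>i<L. h i ((i + sub L a' a) mod L))"
proof (rule sum.reindex_bij_witness[where i="sub L a" and j="sub L a"])
  fix c assume "c \<in> {..<L}"
  then have c: "c < L" by simp
  show "sub L a (sub L a c) = c" using c assms by (simp add: sub_sub)
  show "sub L a c \<in> {..<L}" using c assms by (simp add: sub_lt)
  have e: "sub L a' c = (sub L a c + sub L a' a) mod L" using sub_shift2[of a L a' c] c assms by simp
  show "h (sub L a c) ((sub L a c + sub L a' a) mod L) = h (sub L a c) (sub L a' c)"
    by (simp only: e)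
qed (use assms in \<open>simp_all add: sub_sub sub_lt\<close>)

lemma oneD:
  fixes F :: "nat \<Rightarrow> nat \<Rightarrow> nat"
  assumes mL: "m < L" and DL: "D < L" and Z: "\<And>i i'. m < i \<or> m < i' \<Longrightarrow> F i i' = 0"
  shows "(\<Sum>i<L. F i ((i+D) mod L)) = (\<Sum>i\<le>m-D. F i (i+D))
           + (if D = 0 then 0 else \<Sum>i\<le>m-(L-D). F (i+(L-D)) i)"
proof -
  have split: "(\<Sum>i<L. F i ((i+D) mod L)) = (\<Sum>i<L-D. F i ((i+D) mod L)) + (\<Sum>i\<in>{L-D..<L}. F i ((i+D) mod L))"
    using sum.atLeastLessThan_concat[of 0 "L-D" L "\<lambda>i. F i ((i+D) mod L)"] by (simp add: lessThan_atLeast0)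
  have p1a: "(\<Sum>i<L-D. F i ((i+D) mod L)) = (\<Sum>i<L-D. F i (i+D))"
    by (rule sum.cong) auto
  have p1: "(\<Sum>i<L-D. F i (i+D)) = (\<Sum>i\<le>m-D. F i (i+D))"
  proof (cases "D \<le> m")
    case True
    show ?thesis
    proof (rule sum.mono_neutral_right)
      show "\<forall>i\<in>{..<L - D} - {..m - D}. F i (i + D) = 0"
        using True by (auto intro!: Z)
    qed (use True mL in auto)
  next
    case False
    then have "(\<Sum>i<L-D. F i (i+D)) = 0" by (intro sum.neutral) (auto intro: Z)
    moreover have "(\<Sum>i\<le>m-D. F i (i+D)) = 0" using False by (auto intro: Z)
    ultimately show ?thesis by simp
  qed
  have p2a: "(\<Sum>i\<in>{L-D..<L}. F i ((i+D) mod L)) = (\<Sum>i<D. F (i+(L-D)) i)"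
  proof -
    have "(\<Sum>i\<in>{L-D..<L}. F i ((i+D) mod L)) = (\<Sum>i\<in>{0+(L-D)..<D+(L-D)}. F i ((i+D) mod L))"
      using DL by simp
    also have "\<dots> = (\<Sum>i\<in>{0..<D}. F (i+(L-D)) ((i+(L-D)+D) mod L))"
      by (rule sum.shift_bounds_nat_ivl)
    also have "\<dots> = (\<Sum>i<D. F (i+(L-D)) i)"
      using DL by (auto simp: lessThan_atLeast0 intro!: sum.cong)
    finally show ?thesis .
  qed
  have p2: "(\<Sum>i<D. F (i+(L-D)) i) = (if D = 0 then 0 else \<Sum>i\<le>m-(L-D). F (i+(L-D)) i)"
  proof (cases "D = 0")
    case True then show ?thesis by simp
  next
    case False
    show ?thesis
    proof (cases "L - D \<le> m")
      case True
      have "(\<Sum>i<D. F (i+(L-D)) i) = (\<Sum>i\<le>m-(L-D). F (i+(L-D)) i)"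
      proof (rule sum.mono_neutral_right)
        show "\<forall>i\<in>{..<D} - {..m - (L - D)}. F (i + (L - D)) i = 0"
          using True by (auto intro!: Z)
      qed (use True mL in auto)
      then show ?thesis using False by simp
    next
      case c: False
      then have "(\<Sum>i<D. F (i+(L-D)) i) = 0" by (intro sum.neutral) (auto intro: Z)
      moreover have "(\<Sum>i\<le>m-(L-D). F (i+(L-D)) i) = 0" using c by (auto intro: Z)
      ultimately show ?thesis by simp
    qed
  qed
  show ?thesis using split p1a p1 p2a p2 by simp
qed

definition G :: "nat \<Rightarrow> nat \<Rightarrow> (nat \<Rightarrow> nat \<Rightarrow> nat \<Rightarrow> nat \<Rightarrow> pauli) \<Rightarrow> nat \<Rightarrow> nat \<Rightarrow> nat \<Rightarrow> nat \<Rightarrow> pauli" where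
  "G m1 m2 Hc i j t k = (if i \<le> m1 \<and> j \<le> m2 then Hc i j t k else PI)"

definition SS :: "nat \<Rightarrow> nat \<Rightarrow> nat \<Rightarrow> (nat \<Rightarrow> nat \<Rightarrow> nat \<Rightarrow> nat \<Rightarrow> pauli) \<Rightarrow> nat \<Rightarrow> nat \<Rightarrow> nat \<Rightarrow> nat \<Rightarrow> nat \<Rightarrow> nat \<Rightarrow> nat" where
  "SS n m1 m2 Hc t t' i j i' j' = (\<Sum>k<n. sympl (G m1 m2 Hc i j t k) (G m1 m2 Hc i' j' t' k))"

lemma SS_zero: "m1 < i \<or> m2 < j \<or> m1 < i' \<or> m2 < j' \<Longrightarrow> SS n m1 m2 Hc t t' i j i' j' = 0"
  unfolding SS_def by (intro sum.neutral) (auto simp: G_def sympl_def)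

lemma SS_sym: "SS n m1 m2 Hc t t' i j i' j' = SS n m1 m2 Hc t' t i' j' i j"
  unfolding SS_def by (intro sum.cong) (auto simp: sympl_def)

lemma SS_mod: "i \<le> m1 \<Longrightarrow> j \<le> m2 \<Longrightarrow> i' \<le> m1 \<Longrightarrow> j' \<le> m2 \<Longrightarrow>
   SS n m1 m2 Hc t t' i j i' j' mod 2 = sympl_mat n (Hc i j) (Hc i' j') t t'"
  unfolding SS_def sympl_mat_def G_def by simp

lemma mod2_nested:
  fixes f :: "nat \<Rightarrow> nat \<Rightarrow> nat"
  shows "(\<Sum>i\<in>A. \<Sum>j\<in>B. f i j) mod 2 = (\<Sum>i\<in>A. \<Sum>j\<in>B. f i j mod 2) mod 2"
proof -
  have "(\<Sum>i\<in>A. \<Sum>j\<in>B. f i j) mod 2 = (\<Sum>i\<in>A. (\<Sum>j\<in>B. f i j) mod 2) mod 2"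
    by (rule mod_sum_eq[symmetric])
  also have "\<dots> = (\<Sum>i\<in>A. (\<Sum>j\<in>B. f i j mod 2) mod 2) mod 2"
    by (simp only: mod_sum_eq)
  also have "\<dots> = (\<Sum>i\<in>A. \<Sum>j\<in>B. f i j mod 2) mod 2"
    by (rule mod_sum_eq)
  finally show ?thesis .
qed

lemma quadgen:
  fixes f g :: "nat \<Rightarrow> nat \<Rightarrow> nat"
  assumes "d1 \<le> m1 \<Longrightarrow> d2 \<le> m2 \<Longrightarrow> (\<Sum>i\<le>m1-d1. \<Sum>j\<le>m2-d2. g i j) mod 2 = 0"
    and "\<And>i j. d1 \<le> m1 \<Longrightarrow> d2 \<le> m2 \<Longrightarrow> i \<le> m1-d1 \<Longrightarrow> j \<le> m2-d2 \<Longrightarrow> f i j mod 2 = g i j"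
    and "\<And>i j. \<not>(d1 \<le> m1 \<and> d2 \<le> m2) \<Longrightarrow> i \<le> m1-d1 \<Longrightarrow> j \<le> m2-d2 \<Longrightarrow> f i j = 0"
  shows "(\<Sum>i\<le>m1-d1. \<Sum>j\<le>m2-d2. f i j) mod 2 = 0"
proof (cases "d1 \<le> m1 \<and> d2 \<le> m2")
  case True
  have "(\<Sum>i\<le>m1-d1. \<Sum>j\<le>m2-d2. f i j) mod 2 = (\<Sum>i\<le>m1-d1. \<Sum>j\<le>m2-d2. f i j mod 2) mod 2"
    by (rule mod2_nested)
  also have "\<dots> = (\<Sum>i\<le>m1-d1. \<Sum>j\<le>m2-d2. g i j) mod 2"
    using assms(2) True by (auto intro!: sum.cong arg_cong[where f="\<lambda>x. x mod 2"])
  finally show ?thesis using assms(1) True by simp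
next
  case False
  then show ?thesis using assms(3) by simp
qed

lemma block:
  assumes "a < L1" "c < L1" "b < L2" "d < L2" "m1 < L1" "m2 < L2"
  shows "sc2d_block m1 m2 L1 L2 r n Hc a b c d t k = G m1 m2 Hc (sub L1 a c) (sub L2 b d) t k"
proof -
  have e1: "(int a - int c) mod int L1 = int (sub L1 a c)"
    using sub_int[of a L1 c] assms by (metis int_nat_eq pos_mod_sign of_nat_0_less_iff order_le_less_trans zero_le)
  have e2: "(int b - int d) mod int L2 = int (sub L2 b d)"
    using sub_int[of b L2 d] assms by (metis int_nat_eq pos_mod_sign of_nat_0_less_iff order_le_less_trans zero_le)
  have ex: "(\<exists>i\<le>m1. \<exists>j\<le>m2. int i mod int L1 = (int a - int c) mod int L1 \<and> int j mod int L2 = (int b - int d) mod int L2)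
      \<longleftrightarrow> sub L1 a c \<le> m1 \<and> sub L2 b d \<le> m2"
  proof
    assume "\<exists>i\<le>m1. \<exists>j\<le>m2. int i mod int L1 = (int a - int c) mod int L1 \<and> int j mod int L2 = (int b - int d) mod int L2"
    then obtain i j where ij: "i \<le> m1" "j \<le> m2" "int i mod int L1 = (int a - int c) mod int L1"
        "int j mod int L2 = (int b - int d) mod int L2" by blast
    have "int i mod int L1 = int i" using ij assms by (intro mod_pos_pos_trivial) auto
    moreover have "int j mod int L2 = int j" using ij assms by (intro mod_pos_pos_trivial) auto
    ultimately show "sub L1 a c \<le> m1 \<and> sub L2 b d \<le> m2" using ij e1 e2 by simp
  next
    assume h: "sub L1 a c \<le> m1 \<and> sub L2 b d \<le> m2"
    have "int (sub L1 a c) mod int L1 = int (sub L1 a c)" using h assms by (intro mod_pos_pos_trivial) auto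
    moreover have "int (sub L2 b d) mod int L2 = int (sub L2 b d)" using h assms by (intro mod_pos_pos_trivial) auto
    ultimately show "\<exists>i\<le>m1. \<exists>j\<le>m2. int i mod int L1 = (int a - int c) mod int L1 \<and> int j mod int L2 = (int b - int d) mod int L2"
      using h e1 e2 by metis
  qed
  show ?thesis unfolding sc2d_block_def ex G_def Let_def using e1 e2 by simp
qed

lemma sympl_mat_sym: "sympl_mat n P Q a b = sympl_mat n Q P b a"
  unfolding sympl_mat_def by (intro arg_cong[where f="\<lambda>x. x mod 2"] sum.cong) (auto simp: sympl_def)

lemma add_mod2: "(x::nat) mod 2 = 0 \<Longrightarrow> y mod 2 = 0 \<Longrightarrow> (x + y) mod 2 = 0"
  by presburger

theorem theorem1:
  fixes r n m1 m2 L1 L2 :: nat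
    and Hc :: "nat \<Rightarrow> nat \<Rightarrow> nat \<Rightarrow> nat \<Rightarrow> pauli"
  assumes "r > 0" and "n > 0" and "m1 > 0" and "m2 > 0" and "L1 > 0" and "L2 > 0"
    and "L1 > m1" and "L2 > m2"
    and cond1: "\<And>d1 d2 a b. d1 \<le> m1 \<Longrightarrow> d2 \<le> m2 \<Longrightarrow> a < r \<Longrightarrow> b < r \<Longrightarrow>
        (\<Sum>i\<le>m1 - d1. \<Sum>j\<le>m2 - d2. sympl_mat n (Hc i j) (Hc (i + d1) (j + d2)) a b) mod 2 = 0"
    and cond2: "\<And>d1 d2 a b. d1 \<le> m1 \<Longrightarrow> d2 \<le> m2 \<Longrightarrow> a < r \<Longrightarrow> b < r \<Longrightarrow>
        (\<Sum>i\<le>m1 - d1. \<Sum>j\<le>m2 - d2. sympl_mat n (Hc (i + d1) j) (Hc i (j + d2)) a b) mod 2 = 0"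
  shows "\<forall>R1 < r * L1 * L2. \<forall>R2 < r * L1 * L2.
           rows_commute (n * L1 * L2) (sc2d_H m1 m2 L1 L2 r n Hc) R1 R2"
proof (intro allI impI)
  fix R1 R2
  assume R1: "R1 < r * L1 * L2" and R2: "R2 < r * L1 * L2"
  define M where "M = sc2d_H m1 m2 L1 L2 r n Hc"
  define S where "S = SS n m1 m2 Hc (R1 mod r) (R2 mod r)"
  define t where "t = R1 mod r"
  define t' where "t' = R2 mod r"
  define a where "a = R1 div r div L2"
  define b where "b = R1 div r mod L2"
  define a' where "a' = R2 div r div L2"
  define b' where "b' = R2 div r mod L2"
  have tr: "t < r" "t' < r" using assms(1) by (auto simp: t_def t'_def)
  have "R1 div r < L1 * L2" using R1 assms(1) by (simp add: div_less_iff_less_mult ac_simps)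
  then have aL: "a < L1" unfolding a_def by (simp add: div_less_iff_less_mult assms(6) mult.commute)
  have "R2 div r < L1 * L2" using R2 assms(1) by (simp add: div_less_iff_less_mult ac_simps)
  then have aL': "a' < L1" unfolding a'_def by (simp add: div_less_iff_less_mult assms(6) mult.commute)
  have bL: "b < L2" "b' < L2" using assms(6) by (auto simp: b_def b'_def)
  have col: "M R ((c*L2+d)*n+k) = G m1 m2 Hc (sub L1 (R div r div L2) c) (sub L2 (R div r mod L2) d) (R mod r) k"
    if "c < L1" "d < L2" "k < n" "R div r div L2 < L1" for R c d k
  proof -
    have "((c*L2+d)*n+k) div n = c*L2+d" using that by simp
    moreover have "((c*L2+d)*n+k) mod n = k" using that by simp
    moreover have "(c*L2+d) div L2 = c" "(c*L2+d) mod L2 = d" using that by auto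
    ultimately show ?thesis unfolding M_def sc2d_H_def Let_def
      using block[of "R div r div L2" L1 c "R div r mod L2" L2 d m1 m2 r n Hc "R mod r" k] that assms(6,7,8)
      by simp
  qed
  define D1 where "D1 = sub L1 a' a"
  define D2 where "D2 = sub L2 b' b"
  have D1L: "D1 < L1" using aL aL' by (simp add: D1_def sub_lt)
  have D2L: "D2 < L2" using bL by (simp add: D2_def sub_lt)
  define Phi where "Phi = (\<lambda>i i'. \<Sum>j<L2. S i j i' ((j + D2) mod L2))"
  have "(\<Sum>C<n*L1*L2. sympl (M R1 C) (M R2 C)) = (\<Sum>C<(L1*L2)*n. sympl (M R1 C) (M R2 C))"
    by (simp add: mult.commute mult.left_commute)
  also have "\<dots> = (\<Sum>q<L1*L2. \<Sum>k<n. sympl (M R1 (q*n+k)) (M R2 (q*n+k)))"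
    by (rule sum_split)
  also have "\<dots> = (\<Sum>c<L1. \<Sum>d<L2. \<Sum>k<n. sympl (M R1 ((c*L2+d)*n+k)) (M R2 ((c*L2+d)*n+k)))"
    by (rule sum_split)
  also have "\<dots> = (\<Sum>c<L1. \<Sum>d<L2. S (sub L1 a c) (sub L2 b d) (sub L1 a' c) (sub L2 b' d))"
    unfolding S_def SS_def
    using aL aL' by (intro sum.cong refl) (simp add: col a_def b_def a'_def b'_def)
  also have "\<dots> = (\<Sum>c<L1. \<Sum>j<L2. S (sub L1 a c) j (sub L1 a' c) ((j + D2) mod L2))"
    unfolding D2_def
    by (intro sum.cong refl reindex[of b L2 b' "\<lambda>x y. S (sub L1 a _) x (sub L1 a' _) y"] bL)
  also have "\<dots> = (\<Sum>i<L1. Phi i ((i + D1) mod L1))"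
    unfolding D1_def Phi_def
    by (rule reindex[of a L1 a' "\<lambda>x y. \<Sum>j<L2. S x j y ((j + D2) mod L2)"]) (use aL aL' in auto)
  also have "\<dots> = (\<Sum>i\<le>m1-D1. Phi i (i+D1)) + (if D1 = 0 then 0 else \<Sum>i\<le>m1-(L1-D1). Phi (i+(L1-D1)) i)"
    by (rule oneD) (use assms(7) D1L in \<open>auto simp: Phi_def S_def SS_zero intro!: sum.neutral\<close>)
  finally have T: "(\<Sum>C<n*L1*L2. sympl (M R1 C) (M R2 C)) =
     (\<Sum>i\<le>m1-D1. Phi i (i+D1)) + (if D1 = 0 then 0 else \<Sum>i\<le>m1-(L1-D1). Phi (i+(L1-D1)) i)" .
  have Phi_eq: "Phi i i' = (\<Sum>j\<le>m2-D2. S i j i' (j+D2)) + (if D2 = 0 then 0 else \<Sum>j\<le>m2-(L2-D2). S i (j+(L2-D2)) i' j)" for i i'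
    unfolding Phi_def
    by (rule oneD) (use assms(8) D2L in \<open>auto simp: S_def SS_zero\<close>)
  have Q1: "(\<Sum>i\<le>m1-dA. \<Sum>j\<le>m2-dB. S i j (i+dA) (j+dB)) mod 2 = 0" for dA dB
    by (rule quadgen[where g="\<lambda>i j. sympl_mat n (Hc i j) (Hc (i + dA) (j + dB)) t t'"])
       (use tr in \<open>auto simp: S_def SS_mod SS_zero t_def t'_def intro: cond1\<close>)
  have Q2: "(\<Sum>i\<le>m1-dA. \<Sum>j\<le>m2-dB. S i (j+dB) (i+dA) j) mod 2 = 0" for dA dB
    by (rule quadgen[where g="\<lambda>i j. sympl_mat n (Hc (i + dA) j) (Hc i (j + dB)) t' t"])
       (use tr in \<open>auto simp: S_def SS_mod SS_zero t_def t'_def intro: cond2 sympl_mat_sym\<close>)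
  have Q3: "(\<Sum>i\<le>m1-dA. \<Sum>j\<le>m2-dB. S (i+dA) j i (j+dB)) mod 2 = 0" for dA dB
    by (rule quadgen[where g="\<lambda>i j. sympl_mat n (Hc (i + dA) j) (Hc i (j + dB)) t t'"])
       (use tr in \<open>auto simp: S_def SS_mod SS_zero t_def t'_def intro: cond2\<close>)
  have Q4: "(\<Sum>i\<le>m1-dA. \<Sum>j\<le>m2-dB. S (i+dA) (j+dB) i j) mod 2 = 0" for dA dB
    by (rule quadgen[where g="\<lambda>i j. sympl_mat n (Hc i j) (Hc (i + dA) (j + dB)) t' t"])
       (use tr in \<open>auto simp: S_def SS_mod SS_zero t_def t'_def intro: cond1 sympl_mat_sym\<close>)
  have "(\<Sum>C<n*L1*L2. sympl (M R1 C) (M R2 C)) mod 2 = 0"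
    unfolding T Phi_eq
    using Q1[where dA=D1 and dB=D2] Q2[where dA=D1 and dB="L2-D2"] Q3[where dA="L1-D1" and dB=D2] Q4[where dA="L1-D1" and dB="L2-D2"]
    by (cases "D1 = 0"; cases "D2 = 0")
       (simp_all add: sum.distrib add_mod2 Q1 Q2 Q3 Q4)
  then show "rows_commute (n * L1 * L2) (sc2d_H m1 m2 L1 L2 r n Hc) R1 R2"
    unfolding rows_commute_def sympl_mat_def M_def by simp
qed

end
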